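(* Let $\hat C\subseteq\mathbb Z^2$ be a set whose set of $x$-coordinates $\hat C_/$ is bounded. Let $\hat F_1,\dots,\hat F_t$ ($t\ge1$) be the intersections of $\hat C$ with those vertical lines $\{x=c\}$ that meet $\hat C$ in a finite nonempty set, and let $\hat K_1,\dots,\hat K_r$ be the intersections of $\hat C$ with those vertical lines that meet $\hat C$ in an infinite set; for a point set $S$ in one vertical line $\{x=c\}$ write $\operatorname{Col}(S)=\{(c,y):y\in\mathbb Z\}$. Let $\ell$ be the minimal number of elements of an integer interval $[a,b]$ for which there exists $W\subseteq\mathbb Z$ with $\hat C_/+W=[a,b]$. Suppose that for each $i\in\{1,\dots,r\}$ there are sets $\hat S_{i,1},\dots,\hat S_{i,n_i}$ with $\hat S_{i,1}\cup\cdots\cup\hat S_{i,n_i}=\hat K_i$ such that for each $i,j$ there exist (possibly empty) sets $\hat W_{i,j;\mu},\hat U_{i,j;\nu}\subseteq\mathbb Z^2$ ($1\le\mu\le t$, $1\le\nu\le r$) with \[\operatorname{Col}(\hat K_i)\setminus\hat S_{i,j}=\bigcup_{\mu=1}^{t}\bigl(\hat F_\mu+\hat W_{i,j;\mu}\bigr)\cup\bigcup_{\nu=1}^{r}\bigl(\hat K_\nu+\hat U_{i,j;\nu}\bigr).\] Then for every integer $m$ with \[m\ge(\ell+1)\Bigl(t+\sum_{i=1}^r n_i\Bigr),\] the set $C=\pi_m(\hat C)$ arises as a minimal additive complement in $\mathbb Z$.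
   Context: Sums of subsets of $\mathbb Z^2$ or $\mathbb Z$ are Minkowski sums $X+Y=\{x+y:x\in X,y\in Y\}$. For $m\ge1$, $\pi_m:\mathbb Z^2\to\mathbb Z$ is the map $(x,y)\mapsto x+my$ (equivalently the quotient $\mathbb Z^2\to\mathbb Z^2/\mathbb Z(m,-1)\cong\mathbb Z$). $C\subseteq\mathbb Z$ is a minimal additive complement (MAC) to $W\subseteq\mathbb Z$ if $C+W=\mathbb Z$ and no proper subset $C'\subsetneq C$ satisfies $C'+W=\mathbb Z$; $C$ arises as a MAC if such a $W$ exists. *)

theory Defs
  imports Main "HOL-Library.Product_Plus"
begin

definition msum :: "'a::plus set \<Rightarrow> 'a set \<Rightarrow> 'a set" (infixl "\<oplus>" 65) where
  "A \<oplus> B = {x + y | x y. x \<in> A \<and> y \<in> B}"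

definition proj_m :: "int \<Rightarrow> int \<times> int \<Rightarrow> int" where
  "proj_m m p = fst p + m * snd p"

definition is_MAC :: "int set \<Rightarrow> int set \<Rightarrow> bool" where
  "is_MAC C W \<longleftrightarrow> C \<oplus> W = UNIV \<and> (\<forall>C'. C' \<subset> C \<longrightarrow> C' \<oplus> W \<noteq> UNIV)"

definition arises_as_MAC :: "int set \<Rightarrow> bool" where
  "arises_as_MAC C \<longleftrightarrow> (\<exists>W. is_MAC C W)"

definition xcoords :: "(int \<times> int) set \<Rightarrow> int set" where
  "xcoords A = fst ` A"

definition colset :: "int \<Rightarrow> (int \<times> int) set" where
  "colset c = {(c, y) | y. True}"

definition column :: "(int \<times> int) set \<Rightarrow> int \<Rightarrow> (int \<times> int) set" where
  "column A c = {p \<in> A. fst p = c}"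

definition fin_cols :: "(int \<times> int) set \<Rightarrow> int set" where
  "fin_cols A = {c. finite (column A c) \<and> column A c \<noteq> {}}"

definition inf_cols :: "(int \<times> int) set \<Rightarrow> int set" where
  "inf_cols A = {c. infinite (column A c)}"

definition ell :: "int set \<Rightarrow> nat" where
  "ell X = (LEAST k. \<exists>a b W. a \<le> b \<and> X \<oplus> W = {a..b} \<and> k = card {a..b})"

end

theory Submission
  imports Defs
begin

lemma finite_mac_int:
  fixes F :: "int set"
  assumes fin: "finite F" and ne: "F \<noteq> {}"
  shows "\<exists>Y. (\<forall>z. \<exists>f\<in>F. \<exists>y\<in>Y. z = f + y) \<and>
             (\<forall>f\<in>F. \<exists>y\<in>Y. \<forall>f'\<in>F. \<forall>y'\<in>Y. f + y = f' + y' \<longrightarrow> f' = f)"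
proof -
  define R where "R = Max (abs ` F)"
  have R: "\<forall>f\<in>F. \<bar>f\<bar> \<le> R" unfolding R_def using fin by auto
  define K where "K = 4*R+3"
  have Kbig: "\<And>a b. a \<noteq> b \<Longrightarrow> \<bar>K*(a-b)\<bar> \<ge> K"
  proof -
    fix a b :: int assume "a \<noteq> b"
    then have "\<bar>a-b\<bar> \<ge> 1" by linarith
    moreover have "K \<ge> 0" using R ne K_def by fastforce
    ultimately show "\<bar>K*(a-b)\<bar> \<ge> K" by (simp add: abs_mult mult_le_cancel_left1)
  qed
  define B where "B = {K*g - f | g f. g \<in> F \<and> f \<in> F \<and> f \<noteq> g}"
  define Y where "Y = - B"
  have wit: "\<forall>f\<in>F. \<exists>y\<in>Y. \<forall>f'\<in>F. \<forall>y'\<in>Y. f + y = f' + y' \<longrightarrow> f' = f"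
  proof
    fix f assume f: "f \<in> F"
    have "K*f - f \<in> Y"
    proof (rule ccontr)
      assume "K*f - f \<notin> Y"
      then obtain g h where gh: "g \<in> F" "h \<in> F" "h \<noteq> g" "K*f - f = K*g - h"
        unfolding Y_def B_def by auto
      show False
      proof (cases "f = g")
        case True then show False using gh by simp
      next
        case False
        have "K*(f-g) = f - h" using gh by (simp add: algebra_simps)
        moreover have "\<bar>f - h\<bar> \<le> 2*R" using R[rule_format, OF f] R[rule_format, OF gh(2)] by linarith
        ultimately show False using Kbig[OF False] K_def by linarith
      qed
    qed
    moreover have "\<forall>f'\<in>F. \<forall>y'\<in>Y. f + (K*f - f) = f' + y' \<longrightarrow> f' = f"
    proof (intro ballI impI)
      fix f' y' assume "f' \<in> F" "y' \<in> Y" "f + (K*f - f) = f' + y'"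
      then show "f' = f" unfolding Y_def B_def using f
        by (smt (verit, best) ComplD mem_Collect_eq)
    qed
    ultimately show "\<exists>y\<in>Y. \<forall>f'\<in>F. \<forall>y'\<in>Y. f + y = f' + y' \<longrightarrow> f' = f" by blast
  qed
  have cov: "\<forall>z. \<exists>f\<in>F. \<exists>y\<in>Y. z = f + y"
  proof (rule ccontr)
    assume "\<not> ?thesis"
    then obtain z where z: "\<forall>f\<in>F. \<forall>y\<in>Y. z \<noteq> f + y" by blast
    have inB: "\<forall>f\<in>F. z - f \<in> B"
    proof
      fix f assume "f \<in> F"
      then have "z - f \<notin> Y" using z by force
      then show "z - f \<in> B" unfolding Y_def by simp
    qed
    obtain f0 where f0: "f0 \<in> F" using ne by blast
    obtain g0 h0 where g0: "g0 \<in> F" "h0 \<in> F" "h0 \<noteq> g0" "z - f0 = K*g0 - h0"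
      using inB f0 unfolding B_def by blast
    have all: "\<forall>f\<in>F. f - (z - K*g0) \<in> F \<and> f - (z - K*g0) \<noteq> g0"
    proof
      fix f assume f: "f \<in> F"
      obtain g h where gh: "g \<in> F" "h \<in> F" "h \<noteq> g" "z - f = K*g - h"
        using inB f unfolding B_def by blast
      have "g = g0"
      proof (rule ccontr)
        assume ne: "g \<noteq> g0"
        have "K*(g-g0) = f0 - f + h - h0" using gh g0 by (simp add: algebra_simps)
        moreover have "\<bar>f0 - f + h - h0\<bar> \<le> 4*R" using R[rule_format, OF f] R[rule_format, OF f0] R[rule_format, OF gh(2)] R[rule_format, OF g0(2)] by linarith
        ultimately show False using Kbig[OF ne] K_def by linarith
      qed
      then have "f - (z - K*g0) = h" using gh by simp
      then show "f - (z - K*g0) \<in> F \<and> f - (z - K*g0) \<noteq> g0" using gh \<open>g = g0\<close> by simp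
    qed
    define e where "e = z - K*g0"
    show False
    proof (cases "e = 0")
      case True then show False using all g0 e_def by force
    next
      case False
      show False
      proof (cases "e > 0")
        case True
        have "Min F - e \<in> F" using all e_def fin ne by simp
        then have "Min F \<le> Min F - e" using fin by simp
        then show False using True by simp
      next
        case False
        have "Max F - e \<in> F" using all e_def fin ne by simp
        then have "Max F - e \<le> Max F" using fin by simp
        then show False using False \<open>e \<noteq> 0\<close> by simp
      qed
    qed
  qed
  show ?thesis using cov wit by blast
qed


lemma res_lemma:
  fixes i i' L m d T :: int
  assumes "0 \<le> i" "i < T" "0 \<le> i'" "i' < T" "\<bar>d\<bar> \<le> L - 1" "L \<ge> 1" "m \<ge> (L+1)*T"
    "(i*(L+1) + L + d) mod m = (i'*(L+1) + L) mod m"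
  shows "i = i' \<and> d = 0"
proof -
  have m0: "m > 0" using assms by (smt (verit) mult_pos_pos)
  have "m dvd ((i*(L+1) + L + d) - (i'*(L+1) + L))" using assms(8) by (simp add: mod_eq_dvd_iff)
  then obtain k where "(i*(L+1) + L + d) - (i'*(L+1) + L) = m*k" by (elim dvdE)
  then have k: "(i - i')*(L+1) + d = m*k" by (simp add: algebra_simps)
  have a: "\<bar>(i - i')*(L+1)\<bar> \<le> (T-1)*(L+1)"
  proof -
    have "\<bar>(i - i')*(L+1)\<bar> = \<bar>i - i'\<bar>*(L+1)" using assms by (simp add: abs_mult)
    also have "\<dots> \<le> (T-1)*(L+1)" using assms by (intro mult_right_mono) auto
    finally show ?thesis .
  qed
  have "k = 0"
  proof (rule ccontr)
    assume "k \<noteq> 0"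
    then have "\<bar>m*k\<bar> \<ge> m" using m0 by (simp add: abs_mult)
    moreover have "(T-1)*(L+1) = T*(L+1) - (L+1)" by (simp add: algebra_simps)
    ultimately show False using k a assms by (smt (verit) mult.commute)
  qed
  then have e: "(i - i')*(L+1) = - d" using k by simp
  have "i = i'"
  proof (rule ccontr)
    assume "i \<noteq> i'"
    then have "\<bar>i - i'\<bar> \<ge> 1" by simp
    then have "\<bar>(i - i')*(L+1)\<bar> \<ge> L+1" using assms by (simp add: abs_mult)
    then show False using e assms by simp
  qed
  then show ?thesis using e by simp
qed

lemma notin_window:
  fixes i j L :: int
  assumes "L \<ge> 0" "j*(L+1) \<le> i*(L+1)+L" "i*(L+1)+L \<le> j*(L+1)+L-1"
  shows False
proof (cases "i < j")
  case True
  then have "i*(L+1) \<le> (j-1)*(L+1)" using assms by (intro mult_right_mono) auto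
  then show False using assms by (simp add: algebra_simps)
next
  case False
  then have "j*(L+1) \<le> i*(L+1)" using assms by (intro mult_right_mono) auto
  then show False using assms by linarith
qed

lemma MAC_crit:
  assumes "\<forall>z. \<exists>c\<in>C. \<exists>w\<in>W. z = c + w"
    and "\<forall>c\<in>C. \<exists>z. \<forall>c'\<in>C. \<forall>w\<in>W. z = c' + w \<longrightarrow> c' = c"
  shows "is_MAC C W"
  unfolding is_MAC_def msum_def
proof (intro conjI allI impI)
  show "{x + y |x y. x \<in> C \<and> y \<in> W} = UNIV" using assms(1) by blast
next
  fix C' assume "C' \<subset> C"
  then obtain c where c: "c \<in> C" "c \<notin> C'" by blast
  obtain z where z: "\<forall>c'\<in>C. \<forall>w\<in>W. z = c' + w \<longrightarrow> c' = c" using assms(2) c by blast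
  have "z \<notin> {x + y |x y. x \<in> C' \<and> y \<in> W}" using z c \<open>C' \<subset> C\<close> by blast
  then show "{x + y |x y. x \<in> C' \<and> y \<in> W} \<noteq> UNIV" by blast
qed


theorem theorem7:
  fixes Chat :: "(int \<times> int) set"
    and n :: "int \<Rightarrow> nat"
    and S :: "int \<Rightarrow> nat \<Rightarrow> (int \<times> int) set"
    and m :: int
  assumes bounded: "\<exists>B. \<forall>x \<in> xcoords Chat. \<bar>x\<bar> \<le> B"
    and t_pos: "fin_cols Chat \<noteq> {}"
    and S_cover: "\<forall>c \<in> inf_cols Chat. (\<Union>j \<in> {1..n c}. S c j) = column Chat c"
    and S_repr: "\<forall>c \<in> inf_cols Chat. \<forall>j \<in> {1..n c}. \<exists>W U :: int \<Rightarrow> (int \<times> int) set.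
        colset c - S c j =
          (\<Union>d \<in> fin_cols Chat. column Chat d \<oplus> W d) \<union> (\<Union>d \<in> inf_cols Chat. column Chat d \<oplus> U d)"
    and m_bound: "m \<ge> (int (ell (xcoords Chat)) + 1) *
                      (int (card (fin_cols Chat)) + (\<Sum>c \<in> inf_cols Chat. int (n c)))"
  shows "arises_as_MAC (proj_m m ` Chat)"
proof -
  define X where "X = xcoords Chat"
  define FC where "FC = fin_cols Chat"
  define IC where "IC = inf_cols Chat"
  define \<pi> where "\<pi> = proj_m m"
  have \<pi>_add: "\<And>p v. \<pi> (p + v) = \<pi> p + \<pi> v" unfolding \<pi>_def proj_m_def by (simp add: algebra_simps)
  have \<pi>_pair: "\<And>x y. \<pi> (x,y) = x + m*y" unfolding \<pi>_def proj_m_def by simp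
  have \<pi>_gen: "\<And>v. \<pi> v = fst v + m * snd v" unfolding \<pi>_def proj_m_def by simp
  have Xmem: "\<And>x. x \<in> X \<longleftrightarrow> (\<exists>y. (x,y) \<in> Chat)" unfolding X_def xcoords_def by force
  obtain Bd where Bd: "\<forall>x\<in>X. \<bar>x\<bar> \<le> Bd" using bounded X_def by auto
  have "X \<subseteq> {-Bd..Bd}" using Bd by (auto simp: abs_le_iff)
  then have finX: "finite X" by (rule finite_subset) simp
  have col_mem: "\<And>c p. p \<in> column Chat c \<longleftrightarrow> p \<in> Chat \<and> fst p = c" unfolding column_def by simp
  have colset_mem: "\<And>c p. p \<in> colset c \<longleftrightarrow> fst p = c" unfolding colset_def by (case_tac p) auto
  have FC_mem: "\<And>c. c \<in> FC \<longleftrightarrow> finite (column Chat c) \<and> column Chat c \<noteq> {}"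
    unfolding FC_def fin_cols_def by simp
  have IC_mem: "\<And>c. c \<in> IC \<longleftrightarrow> infinite (column Chat c)"
    unfolding IC_def inf_cols_def by simp
  have colne_X: "\<And>c. column Chat c \<noteq> {} \<Longrightarrow> c \<in> X"
  proof -
    fix c assume "column Chat c \<noteq> {}"
    then obtain p where "p \<in> Chat" "fst p = c" using col_mem by blast
    then show "c \<in> X" using Xmem by (cases p) auto
  qed
  have FC_sub: "FC \<subseteq> X" using FC_mem colne_X by blast
  have IC_sub: "IC \<subseteq> X"
  proof
    fix c assume "c \<in> IC"
    then have "column Chat c \<noteq> {}" using IC_mem by force
    then show "c \<in> X" by (rule colne_X)
  qed
  have X_cases: "\<forall>c\<in>X. c \<in> FC \<or> c \<in> IC"
  proof
    fix c assume "c \<in> X"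
    then obtain y where "(c,y) \<in> Chat" using Xmem by blast
    then have "(c,y) \<in> column Chat c" by (simp add: col_mem)
    then have "column Chat c \<noteq> {}" by blast
    then show "c \<in> FC \<or> c \<in> IC" using FC_mem IC_mem by blast
  qed
  have Xne: "X \<noteq> {}" using t_pos FC_sub FC_def by blast
  have ex: "\<exists>k a b W. a \<le> b \<and> X \<oplus> W = {a..b} \<and> k = card {a..b}"
  proof -
    define x0 where "x0 = Min X"
    define x1 where "x1 = Max X"
    have x01: "x0 \<in> X" "x1 \<in> X" "\<forall>x\<in>X. x0 \<le> x \<and> x \<le> x1"
      using finX Xne x0_def x1_def by auto
    have "X \<oplus> {-x0 .. -x0 + (x1 - x0)} = {0 .. 2*(x1-x0)}"
    proof (rule set_eqI)
      fix z
      show "z \<in> X \<oplus> {-x0 .. -x0 + (x1 - x0)} \<longleftrightarrow> z \<in> {0 .. 2*(x1-x0)}"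
      proof
        assume "z \<in> X \<oplus> {-x0 .. -x0 + (x1 - x0)}"
        then obtain x w where "x \<in> X" "w \<in> {-x0 .. -x0 + (x1 - x0)}" "z = x + w"
          unfolding msum_def by blast
        then show "z \<in> {0 .. 2*(x1-x0)}" using x01 by auto
      next
        assume z: "z \<in> {0 .. 2*(x1-x0)}"
        show "z \<in> X \<oplus> {-x0 .. -x0 + (x1 - x0)}"
        proof (cases "z \<le> x1 - x0")
          case True
          then have "z = x0 + (z - x0)" "z - x0 \<in> {-x0 .. -x0 + (x1 - x0)}" using z by auto
          then show ?thesis unfolding msum_def using x01 by blast
        next
          case False
          then have "z = x1 + (z - x1)" "z - x1 \<in> {-x0 .. -x0 + (x1 - x0)}" using z by auto
          then show ?thesis unfolding msum_def using x01 by blast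
        qed
      qed
    qed
    moreover have "0 \<le> 2*(x1-x0)" using x01 by auto
    ultimately show ?thesis by blast
  qed
  have "\<exists>a b W. a \<le> b \<and> X \<oplus> W = {a..b} \<and> ell X = card {a..b}"
    unfolding ell_def by (rule LeastI_ex[OF ex])
  then obtain a b W0 where ab: "a \<le> b" "X \<oplus> W0 = {a..b}" "ell X = card {a..b}" by blast
  define L where "L = b - a + 1"
  have L: "int (ell X) = L" using ab by (simp add: L_def)
  have L1: "L \<ge> 1" using ab L_def by simp
  obtain w0 where w0: "w0 \<in> W0"
  proof -
    have "a \<in> X \<oplus> W0" using ab by simp
    then show ?thesis using that unfolding msum_def by blast
  qed
  have inab: "\<And>x w. x \<in> X \<Longrightarrow> w \<in> W0 \<Longrightarrow> a \<le> x + w \<and> x + w \<le> b"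
  proof -
    fix x w assume "x \<in> X" "w \<in> W0"
    then have "x + w \<in> X \<oplus> W0" unfolding msum_def by blast
    then show "a \<le> x + w \<and> x + w \<le> b" using ab by simp
  qed
  have dist: "\<forall>x\<in>X. \<forall>x'\<in>X. \<bar>x - x'\<bar> \<le> L - 1"
  proof (intro ballI)
    fix x x' assume "x \<in> X" "x' \<in> X"
    then have "a \<le> x + w0 \<and> x + w0 \<le> b" "a \<le> x' + w0 \<and> x' + w0 \<le> b" using inab w0 by auto
    then show "\<bar>x - x'\<bar> \<le> L - 1" unfolding L_def by linarith
  qed
  have window: "\<forall>s z. s \<le> z \<and> z \<le> s + L - 1 \<longrightarrow>
      (\<exists>x\<in>X. \<exists>w. (\<forall>x'\<in>X. s \<le> x'+w \<and> x'+w \<le> s+L-1) \<and> x + w = z)"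
  proof (intro allI impI)
    fix s z assume sz: "s \<le> z \<and> z \<le> s + L - 1"
    then have "z - s + a \<in> X \<oplus> W0" using ab L_def by simp
    then obtain x w where xw: "x \<in> X" "w \<in> W0" "z - s + a = x + w" unfolding msum_def by blast
    have "\<forall>x'\<in>X. s \<le> x'+(w + s - a) \<and> x'+(w + s - a) \<le> s+L-1"
    proof
      fix x' assume "x' \<in> X"
      then have "a \<le> x' + w \<and> x' + w \<le> b" using inab xw by auto
      then show "s \<le> x'+(w + s - a) \<and> x'+(w + s - a) \<le> s+L-1" unfolding L_def by linarith
    qed
    moreover have "x + (w + s - a) = z" using xw by simp
    ultimately show "\<exists>x\<in>X. \<exists>w. (\<forall>x'\<in>X. s \<le> x'+w \<and> x'+w \<le> s+L-1) \<and> x + w = z"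
      using xw by blast
  qed

  define Tk where "Tk = FC \<times> {0::nat} \<union> Sigma IC (\<lambda>c. {1..n c})"
  have Tk_mem: "\<And>c j. (c,j) \<in> Tk \<longleftrightarrow> (j = 0 \<and> c \<in> FC) \<or> (c \<in> IC \<and> j \<in> {1..n c})"
    unfolding Tk_def by auto
  have finFC: "finite FC" using FC_sub finX finite_subset by blast
  have finIC: "finite IC" using IC_sub finX finite_subset by blast
  have finTk: "finite Tk" unfolding Tk_def using finFC finIC by auto
  define T where "T = card Tk"
  have "T \<le> card (FC \<times> {0::nat}) + card (Sigma IC (\<lambda>c. {1..n c}))"
    unfolding T_def Tk_def by (rule card_Un_le)
  also have "card (FC \<times> {0::nat}) = card FC" by (simp add: card_cartesian_product)
  also have "card (Sigma IC (\<lambda>c. {1..n c})) = (\<Sum>c\<in>IC. n c)" using finIC by simp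
  finally have "T \<le> card FC + (\<Sum>c\<in>IC. n c)" .
  then have Tle: "int T \<le> int (card FC) + (\<Sum>c\<in>IC. int (n c))" by (metis of_nat_add of_nat_le_iff of_nat_sum)
  have mT: "m \<ge> (L+1) * int T"
  proof -
    have "(L+1) * int T \<le> (L+1) * (int (card FC) + (\<Sum>c\<in>IC. int (n c)))"
      using Tle L1 by (intro mult_left_mono) auto
    also have "\<dots> \<le> m" using m_bound L unfolding X_def FC_def IC_def by simp
    finally show ?thesis .
  qed
  have T1: "T \<ge> 1"
  proof -
    obtain c where "c \<in> FC" using t_pos FC_def by blast
    then have "(c,0) \<in> Tk" using Tk_mem by blast
    then have "Tk \<noteq> {}" by blast
    then show ?thesis using finTk T_def by (simp add: Suc_leI card_gt_0_iff)
  qed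
  obtain idx where idx: "bij_betw idx Tk {0..<T}" using ex_bij_betw_finite_nat[OF finTk] T_def by blast
  have idx_lt: "\<And>\<tau>. \<tau> \<in> Tk \<Longrightarrow> idx \<tau> < T" using idx bij_betwE by fastforce
  have idx_inj: "\<And>\<tau> \<tau>'. \<tau> \<in> Tk \<Longrightarrow> \<tau>' \<in> Tk \<Longrightarrow> idx \<tau> = idx \<tau>' \<Longrightarrow> \<tau> = \<tau>'"
    using idx by (meson bij_betw_imp_inj_on inj_onD)
  have idx_surj: "\<And>i. i < T \<Longrightarrow> \<exists>\<tau>\<in>Tk. idx \<tau> = i"
    using idx by (metis atLeastLessThan_iff bij_betw_imp_surj_on imageE zero_le)
  define q where "q \<tau> = int (idx \<tau>) * (L+1) + L" for \<tau>
  have q_range: "\<And>\<tau>. \<tau> \<in> Tk \<Longrightarrow> L \<le> q \<tau> \<and> q \<tau> \<le> int T * (L+1) - 1"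
  proof -
    fix \<tau> assume "\<tau> \<in> Tk"
    then have "int (idx \<tau>) \<le> int T - 1" using idx_lt by fastforce
    then have "int (idx \<tau>) * (L+1) \<le> (int T - 1) * (L+1)" using L1 by (intro mult_right_mono) auto
    moreover have "0 \<le> int (idx \<tau>) * (L+1)" using L1 by simp
    ultimately show "L \<le> q \<tau> \<and> q \<tau> \<le> int T * (L+1) - 1" unfolding q_def by (simp add: algebra_simps)
  qed
  have mTL: "int T * (L+1) \<le> m" using mT by (simp add: mult.commute)
  have q_mod: "\<And>\<tau>. \<tau> \<in> Tk \<Longrightarrow> q \<tau> mod m = q \<tau>"
  proof -
    fix \<tau> assume "\<tau> \<in> Tk"
    then show "q \<tau> mod m = q \<tau>" using q_range[of \<tau>] mTL L1 by (intro mod_pos_pos_trivial) auto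
  qed
  have res: "\<And>\<tau> \<tau>' x d. \<tau> \<in> Tk \<Longrightarrow> \<tau>' \<in> Tk \<Longrightarrow> x \<in> X \<Longrightarrow> d \<in> X \<Longrightarrow>
      (x - d + q \<tau>') mod m = q \<tau> \<Longrightarrow> \<tau>' = \<tau> \<and> x = d"
  proof -
    fix \<tau> \<tau>' x d assume a: "\<tau> \<in> Tk" "\<tau>' \<in> Tk" "x \<in> X" "d \<in> X" "(x - d + q \<tau>') mod m = q \<tau>"
    have "(int (idx \<tau>')*(L+1) + L + (x - d)) mod m = (int (idx \<tau>)*(L+1) + L) mod m"
      using a q_mod[of \<tau>] unfolding q_def by (simp add: algebra_simps)
    moreover have "\<bar>x - d\<bar> \<le> L - 1" using dist a by blast
    moreover have "int (idx \<tau>) < int T" "int (idx \<tau>') < int T" using idx_lt a by auto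
    ultimately have "int (idx \<tau>') = int (idx \<tau>) \<and> x - d = 0"
      using res_lemma[of "int (idx \<tau>')" "int T" "int (idx \<tau>)" "x - d" L m] L1 mT by simp
    then show "\<tau>' = \<tau> \<and> x = d" using idx_inj a by auto
  qed

  have "\<forall>p. \<exists>WU. fst p \<in> IC \<and> snd p \<in> {1..n (fst p)} \<longrightarrow>
      colset (fst p) - S (fst p) (snd p) =
        (\<Union>d \<in> FC. column Chat d \<oplus> fst WU d) \<union> (\<Union>d \<in> IC. column Chat d \<oplus> snd WU d)"
  proof
    fix p :: "int \<times> nat"
    show "\<exists>WU. fst p \<in> IC \<and> snd p \<in> {1..n (fst p)} \<longrightarrow>
      colset (fst p) - S (fst p) (snd p) =
        (\<Union>d \<in> FC. column Chat d \<oplus> fst WU d) \<union> (\<Union>d \<in> IC. column Chat d \<oplus> snd WU d)"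
    proof (cases "fst p \<in> IC \<and> snd p \<in> {1..n (fst p)}")
      case True
      then have h1: "fst p \<in> inf_cols Chat" and h2: "snd p \<in> {1..n (fst p)}" unfolding IC_def by auto
      obtain W U where WU: "colset (fst p) - S (fst p) (snd p) =
        (\<Union>d \<in> fin_cols Chat. column Chat d \<oplus> W d) \<union> (\<Union>d \<in> inf_cols Chat. column Chat d \<oplus> U d)"
        using S_repr[rule_format, OF h1 h2] by (elim exE)
      show ?thesis
      proof (rule exI[of _ "(W,U)"], rule impI)
        show "colset (fst p) - S (fst p) (snd p) =
        (\<Union>d \<in> FC. column Chat d \<oplus> fst (W,U) d) \<union> (\<Union>d \<in> IC. column Chat d \<oplus> snd (W,U) d)"
          unfolding fst_conv snd_conv FC_def IC_def by (rule WU)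
      qed
    next
      case False
      show ?thesis by (rule exI, rule impI) (use False in blast)
    qed
  qed
  then have "\<exists>f. \<forall>p. fst p \<in> IC \<and> snd p \<in> {1..n (fst p)} \<longrightarrow>
      colset (fst p) - S (fst p) (snd p) =
        (\<Union>d \<in> FC. column Chat d \<oplus> fst (f p) d) \<union> (\<Union>d \<in> IC. column Chat d \<oplus> snd (f p) d)"
    by (rule choice)
  then obtain f where f0: "\<forall>p. fst p \<in> IC \<and> snd p \<in> {1..n (fst p)} \<longrightarrow>
      colset (fst p) - S (fst p) (snd p) =
        (\<Union>d \<in> FC. column Chat d \<oplus> fst (f p) d) \<union> (\<Union>d \<in> IC. column Chat d \<oplus> snd (f p) d)"
    by (elim exE)
  note f = f0[rule_format]
  define V where "V c j = (\<Union>d\<in>FC. fst (f (c,j)) d) \<union> (\<Union>d\<in>IC. snd (f (c,j)) d)" for c j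
  have Vp1: "\<And>c j v. c \<in> IC \<Longrightarrow> j \<in> {1..n c} \<Longrightarrow> v \<in> V c j \<Longrightarrow>
     \<exists>d\<in>X. fst v = c - d \<and> (\<forall>p\<in>column Chat d. p + v \<in> colset c - S c j)"
  proof -
    fix c j v assume c: "c \<in> IC" and j: "j \<in> {1..n c}" and v: "v \<in> V c j"
    have cj: "fst (c,j) \<in> IC \<and> snd (c,j) \<in> {1..n (fst (c,j))}" using c j by simp
    have feq: "colset c - S c j =
        (\<Union>d \<in> FC. column Chat d \<oplus> fst (f (c,j)) d) \<union> (\<Union>d \<in> IC. column Chat d \<oplus> snd (f (c,j)) d)"
      using f[OF cj] by (simp only: fst_conv snd_conv)
    from v obtain d where d: "(d \<in> FC \<and> v \<in> fst (f (c,j)) d) \<or> (d \<in> IC \<and> v \<in> snd (f (c,j)) d)"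
      unfolding V_def by blast
    have sub: "\<forall>p\<in>column Chat d. p + v \<in> colset c - S c j"
    proof
      fix p assume p: "p \<in> column Chat d"
      from d show "p + v \<in> colset c - S c j"
      proof
        assume "d \<in> FC \<and> v \<in> fst (f (c,j)) d"
        then have "p + v \<in> column Chat d \<oplus> fst (f (c,j)) d" using p unfolding msum_def by blast
        then show ?thesis using \<open>d \<in> FC \<and> v \<in> fst (f (c,j)) d\<close> by (subst feq) blast
      next
        assume "d \<in> IC \<and> v \<in> snd (f (c,j)) d"
        then have "p + v \<in> column Chat d \<oplus> snd (f (c,j)) d" using p unfolding msum_def by blast
        then show ?thesis using \<open>d \<in> IC \<and> v \<in> snd (f (c,j)) d\<close> by (subst feq) blast
      qed
    qed
    have "column Chat d \<noteq> {}"
    proof (cases "d \<in> FC")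
      case True then show ?thesis using FC_mem by blast
    next
      case False then have "d \<in> IC" using d by blast
      then have "infinite (column Chat d)" using IC_mem by blast
      then show ?thesis by auto
    qed
    then obtain p0 where p0: "p0 \<in> column Chat d" by blast
    then have "p0 + v \<in> colset c" using sub by blast
    then have "fst p0 + fst v = c" using colset_mem by simp
    moreover have "fst p0 = d" using p0 col_mem by blast
    moreover have "d \<in> X" using \<open>column Chat d \<noteq> {}\<close> colne_X by blast
    ultimately show "\<exists>d\<in>X. fst v = c - d \<and> (\<forall>p\<in>column Chat d. p + v \<in> colset c - S c j)"
      using sub by force
  qed
  have Vp2: "\<And>c j y. c \<in> IC \<Longrightarrow> j \<in> {1..n c} \<Longrightarrow> (c,y) \<notin> S c j \<Longrightarrow>
     \<exists>p\<in>Chat. \<exists>v\<in>V c j. (c,y) = p + v"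
  proof -
    fix c j y assume c: "c \<in> IC" and j: "j \<in> {1..n c}" and y: "(c,y) \<notin> S c j"
    have cj: "fst (c,j) \<in> IC \<and> snd (c,j) \<in> {1..n (fst (c,j))}" using c j by simp
    have feq: "colset c - S c j =
        (\<Union>d \<in> FC. column Chat d \<oplus> fst (f (c,j)) d) \<union> (\<Union>d \<in> IC. column Chat d \<oplus> snd (f (c,j)) d)"
      using f[OF cj] by (simp only: fst_conv snd_conv)
    have "(c,y) \<in> colset c - S c j" using y colset_mem by simp
    then have "(c,y) \<in> (\<Union>d \<in> FC. column Chat d \<oplus> fst (f (c,j)) d) \<union> (\<Union>d \<in> IC. column Chat d \<oplus> snd (f (c,j)) d)"
      unfolding feq .
    then obtain d where "(d \<in> FC \<and> (c,y) \<in> column Chat d \<oplus> fst (f (c,j)) d) \<or>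
                         (d \<in> IC \<and> (c,y) \<in> column Chat d \<oplus> snd (f (c,j)) d)"
      by blast
    then obtain d p v where "p \<in> column Chat d" "(c,y) = p + v"
       "(d \<in> FC \<and> v \<in> fst (f (c,j)) d) \<or> (d \<in> IC \<and> v \<in> snd (f (c,j)) d)"
      unfolding msum_def by blast
    moreover then have "p \<in> Chat" "v \<in> V c j" using col_mem unfolding V_def by auto
    ultimately show "\<exists>p\<in>Chat. \<exists>v\<in>V c j. (c,y) = p + v" by blast
  qed
  have "\<forall>c\<in>FC. \<exists>Y. (\<forall>z. \<exists>f\<in>{y. (c,y)\<in>Chat}. \<exists>y\<in>Y. z = f + y) \<and>
             (\<forall>f\<in>{y. (c,y)\<in>Chat}. \<exists>y\<in>Y. \<forall>f'\<in>{y. (c,y)\<in>Chat}. \<forall>y'\<in>Y. f + y = f' + y' \<longrightarrow> f' = f)"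
  proof
    fix c assume c: "c \<in> FC"
    have eq: "{y. (c,y)\<in>Chat} = snd ` column Chat c"
    proof (rule set_eqI)
      fix y
      show "y \<in> {y. (c,y)\<in>Chat} \<longleftrightarrow> y \<in> snd ` column Chat c"
      proof
        assume "y \<in> {y. (c,y)\<in>Chat}"
        then have "(c,y) \<in> column Chat c" using col_mem by simp
        then show "y \<in> snd ` column Chat c" by (metis image_eqI snd_conv)
      next
        assume "y \<in> snd ` column Chat c"
        then obtain p where "p \<in> column Chat c" "y = snd p" by blast
        then have "p \<in> Chat" "fst p = c" using col_mem by blast+
        then show "y \<in> {y. (c,y)\<in>Chat}" using \<open>y = snd p\<close> by (cases p) simp
      qed
    qed
    have fc: "finite (column Chat c)" "column Chat c \<noteq> {}" using c FC_mem by blast+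
    have "finite {y. (c,y)\<in>Chat}" unfolding eq using fc by blast
    moreover have "{y. (c,y)\<in>Chat} \<noteq> {}" unfolding eq using fc by blast
    ultimately
    show "\<exists>Y. (\<forall>z. \<exists>f\<in>{y. (c,y)\<in>Chat}. \<exists>y\<in>Y. z = f + y) \<and>
             (\<forall>f\<in>{y. (c,y)\<in>Chat}. \<exists>y\<in>Y. \<forall>f'\<in>{y. (c,y)\<in>Chat}. \<forall>y'\<in>Y. f + y = f' + y' \<longrightarrow> f' = f)"
      by (rule finite_mac_int)
  qed
  then have "\<exists>Yf. \<forall>c\<in>FC. (\<forall>z. \<exists>f\<in>{y. (c,y)\<in>Chat}. \<exists>y\<in>Yf c. z = f + y) \<and>
             (\<forall>f\<in>{y. (c,y)\<in>Chat}. \<exists>y\<in>Yf c. \<forall>f'\<in>{y. (c,y)\<in>Chat}. \<forall>y'\<in>Yf c. f + y = f' + y' \<longrightarrow> f' = f)"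
    by (rule bchoice)
  then obtain Yf where Yf0: "\<forall>c\<in>FC. (\<forall>z. \<exists>f\<in>{y. (c,y)\<in>Chat}. \<exists>y\<in>Yf c. z = f + y) \<and>
             (\<forall>f\<in>{y. (c,y)\<in>Chat}. \<exists>y\<in>Yf c. \<forall>f'\<in>{y. (c,y)\<in>Chat}. \<forall>y'\<in>Yf c. f + y = f' + y' \<longrightarrow> f' = f)"
    by (elim exE)
  have Yf: "\<And>c. c \<in> FC \<Longrightarrow> (\<forall>z. \<exists>f\<in>{y. (c,y)\<in>Chat}. \<exists>y\<in>Yf c. z = f + y) \<and>
             (\<forall>f\<in>{y. (c,y)\<in>Chat}. \<exists>y\<in>Yf c. \<forall>f'\<in>{y. (c,y)\<in>Chat}. \<forall>y'\<in>Yf c. f + y = f' + y' \<longrightarrow> f' = f)"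
    using Yf0 by (rule bspec)

  have Lm: "L + 1 \<le> m"
  proof -
    have "(L+1) * 1 \<le> (L+1) * int T" using T1 L1 by (intro mult_left_mono) auto
    then have "L + 1 \<le> (L+1) * int T" by simp
    then show ?thesis using mT by linarith
  qed
  have m0: "m > 0" using Lm L1 by linarith
  define Wt where "Wt \<tau> = (if snd \<tau> = 0 then {q \<tau> - fst \<tau> + m*y | y. y \<in> Yf (fst \<tau>)}
      else insert (q \<tau> - fst \<tau>) {q \<tau> - fst \<tau> + \<pi> v | v. v \<in> V (fst \<tau>) (snd \<tau>)})" for \<tau>
  have Wt_mem0: "\<And>c j w. j = 0 \<Longrightarrow> w \<in> Wt (c,j) \<longleftrightarrow> (\<exists>y\<in>Yf c. w = q (c,j) - c + m*y)"
    unfolding Wt_def by auto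
  have Wt_mem1: "\<And>c j w. j \<noteq> 0 \<Longrightarrow> w \<in> Wt (c,j) \<longleftrightarrow> (w = q (c,j) - c \<or> (\<exists>v\<in>V c j. w = q (c,j) - c + \<pi> v))"
    unfolding Wt_def by auto
  define Wfull where "Wfull = {w. \<exists>w1 y s. w = w1 + m*y \<and> (\<forall>x\<in>X. s \<le> x+w1 \<and> x+w1 \<le> s+L-1) \<and>
      (\<forall>u. s \<le> u \<and> u \<le> s+L-1 \<longrightarrow> (\<forall>\<tau>\<in>Tk. u mod m \<noteq> q \<tau>))}"
  define W where "W = Wfull \<union> (\<Union>\<tau>\<in>Tk. Wt \<tau>)"
  have land: "\<And>\<tau> x' y' w. \<tau> \<in> Tk \<Longrightarrow> x' \<in> X \<Longrightarrow> w \<in> W \<Longrightarrow> (x' + m*y' + w) mod m = q \<tau> \<Longrightarrow>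
        (snd \<tau> = 0 \<and> x' = fst \<tau> \<and> (\<exists>y\<in>Yf (fst \<tau>). w = q \<tau> - fst \<tau> + m*y)) \<or>
        (snd \<tau> \<noteq> 0 \<and> x' = fst \<tau> \<and> w = q \<tau> - fst \<tau>) \<or>
        (snd \<tau> \<noteq> 0 \<and> (\<exists>v\<in>V (fst \<tau>) (snd \<tau>). w = q \<tau> - fst \<tau> + \<pi> v \<and> x' = fst \<tau> - fst v))"
  proof -
    fix \<tau> x' y' w assume \<tau>: "\<tau> \<in> Tk" and x': "x' \<in> X" and w: "w \<in> W"
      and eq: "(x' + m*y' + w) mod m = q \<tau>"
    from w consider (full) "w \<in> Wfull" | (task) \<tau>' where "\<tau>' \<in> Tk" "w \<in> Wt \<tau>'"
      unfolding W_def by blast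
    then show "(snd \<tau> = 0 \<and> x' = fst \<tau> \<and> (\<exists>y\<in>Yf (fst \<tau>). w = q \<tau> - fst \<tau> + m*y)) \<or>
        (snd \<tau> \<noteq> 0 \<and> x' = fst \<tau> \<and> w = q \<tau> - fst \<tau>) \<or>
        (snd \<tau> \<noteq> 0 \<and> (\<exists>v\<in>V (fst \<tau>) (snd \<tau>). w = q \<tau> - fst \<tau> + \<pi> v \<and> x' = fst \<tau> - fst v))"
    proof cases
      case full
      then obtain w1 y s where ws: "w = w1 + m*y" "\<forall>x\<in>X. s \<le> x+w1 \<and> x+w1 \<le> s+L-1"
          "\<forall>u. s \<le> u \<and> u \<le> s+L-1 \<longrightarrow> (\<forall>\<tau>\<in>Tk. u mod m \<noteq> q \<tau>)"
        unfolding Wfull_def by blast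
      have "(x' + w1) mod m \<noteq> q \<tau>" using ws(2,3) x' \<tau> by blast
      moreover have "x' + m*y' + w = (x' + w1) + (y'+y)*m" using ws(1) by (simp add: algebra_simps)
      then have "(x' + m*y' + w) mod m = (x' + w1) mod m" by (simp only: mod_mult_self1)
      ultimately have False using eq by simp
      then show ?thesis by blast
    next
      case task
      obtain c' j' where \<tau>'_eq: "\<tau>' = (c',j')" by (cases \<tau>')
      show ?thesis
      proof (cases "j' = 0")
        case True
        have wt: "w \<in> Wt (c', j')" using task(2) unfolding \<tau>'_eq .
        have "\<exists>y\<in>Yf c'. w = q \<tau>' - c' + m*y" unfolding \<tau>'_eq
          by (rule Wt_mem0[OF True, THEN iffD1, OF wt])
        then obtain y where y: "y \<in> Yf c'" "w = q \<tau>' - c' + m*y" by blast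
        have "(c', j') \<in> Tk" using task(1) unfolding \<tau>'_eq .
        then have "c' \<in> FC" unfolding Tk_mem using True by auto
        then have c'X: "c' \<in> X" using FC_sub by blast
        have "x' + m*y' + w = (x' - c' + q \<tau>') + (y'+y)*m" using y by (simp add: algebra_simps)
        then have "(x' - c' + q \<tau>') mod m = q \<tau>" using eq by (simp only: mod_mult_self1)
        then have "\<tau>' = \<tau> \<and> x' = c'" by (rule res[OF \<tau> task(1) x' c'X])
        then have e1: "snd \<tau> = 0" "fst \<tau> = c'" "q \<tau>' = q \<tau>" "x' = c'" using True \<tau>'_eq by auto
        have "snd \<tau> = 0 \<and> x' = fst \<tau> \<and> (\<exists>y\<in>Yf (fst \<tau>). w = q \<tau> - fst \<tau> + m*y)"
          using y e1 by auto
        then show ?thesis by (rule disjI1)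
      next
        case False
        have "(c', j') \<in> Tk" using task(1) unfolding \<tau>'_eq .
        then have "c' \<in> IC \<and> j' \<in> {1..n c'}" unfolding Tk_mem using False by auto
        then have "c' \<in> IC" "j' \<in> {1..n c'}" by blast+
        then have c'X: "c' \<in> X" using IC_sub by blast
        have wt: "w \<in> Wt (c', j')" using task(2) unfolding \<tau>'_eq .
        have "w = q \<tau>' - c' \<or> (\<exists>v\<in>V c' j'. w = q \<tau>' - c' + \<pi> v)"
          unfolding \<tau>'_eq by (rule Wt_mem1[OF False, THEN iffD1, OF wt])
        then show ?thesis
        proof
          assume wq: "w = q \<tau>' - c'"
          have "x' + m*y' + w = (x' - c' + q \<tau>') + y'*m" using wq by (simp add: algebra_simps)
          then have "(x' - c' + q \<tau>') mod m = q \<tau>" using eq by (simp only: mod_mult_self1)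
          then have "\<tau>' = \<tau> \<and> x' = c'" by (rule res[OF \<tau> task(1) x' c'X])
          then have e1: "snd \<tau> = j'" "fst \<tau> = c'" "q \<tau>' = q \<tau>" "x' = c'" using \<tau>'_eq by auto
          have "snd \<tau> \<noteq> 0 \<and> x' = fst \<tau> \<and> w = q \<tau> - fst \<tau>"
            using wq False e1 by simp
          then show ?thesis by (intro disjI2 disjI1)
        next
          assume "\<exists>v\<in>V c' j'. w = q \<tau>' - c' + \<pi> v"
          then obtain v where v: "v \<in> V c' j'" "w = q \<tau>' - c' + \<pi> v" by blast
          obtain d where d: "d \<in> X" "fst v = c' - d" using Vp1[OF \<open>c' \<in> IC\<close> \<open>j' \<in> {1..n c'}\<close> v(1)] by blast
          have "x' + m*y' + w = (x' - d + q \<tau>') + (y' + snd v)*m"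
            using v(2) d(2) \<pi>_gen[of v] by (simp add: algebra_simps)
          then have "(x' - d + q \<tau>') mod m = q \<tau>" using eq by (simp only: mod_mult_self1)
          then have "\<tau>' = \<tau> \<and> x' = d" by (rule res[OF \<tau> task(1) x' d(1)])
          then have e1: "snd \<tau> = j'" "fst \<tau> = c'" "q \<tau>' = q \<tau>" "x' = d" using \<tau>'_eq by auto
          have "w = q \<tau> - fst \<tau> + \<pi> v \<and> x' = fst \<tau> - fst v" using v(2) e1 d(2) by simp
          then have "snd \<tau> \<noteq> 0 \<and> (\<exists>v\<in>V (fst \<tau>) (snd \<tau>). w = q \<tau> - fst \<tau> + \<pi> v \<and> x' = fst \<tau> - fst v)"
            using v(1) e1 False by auto
          then show ?thesis by (intro disjI2)
        qed
      qed
    qed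
  qed

  have C_eq: "proj_m m ` Chat = \<pi> ` Chat" by (simp add: \<pi>_def)
  have Scol: "\<And>c j. c \<in> IC \<Longrightarrow> j \<in> {1..n c} \<Longrightarrow> S c j \<subseteq> column Chat c"
  proof -
    fix c j assume c: "c \<in> IC" and j: "j \<in> {1..n c}"
    have "S c j \<subseteq> (\<Union>j \<in> {1..n c}. S c j)" using j by blast
    also have "\<dots> = column Chat c"
    proof -
      have "c \<in> inf_cols Chat" using c unfolding IC_def .
      then show ?thesis by (rule S_cover[rule_format])
    qed
    finally show "S c j \<subseteq> column Chat c" .
  qed
  have cover: "\<forall>z. \<exists>c\<in>\<pi> ` Chat. \<exists>w\<in>W. z = c + w"
  proof
    fix z
    define r where "r = z mod m"
    define k where "k = z div m"
    have zrk: "z = r + m*k" unfolding r_def k_def by simp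
    have r0: "0 \<le> r" "r < m" unfolding r_def using m0 by auto
    show "\<exists>c\<in>\<pi> ` Chat. \<exists>w\<in>W. z = c + w"
    proof (cases "\<exists>\<tau>\<in>Tk. r = q \<tau>")
      case True
      then obtain \<tau> where \<tau>: "\<tau> \<in> Tk" "r = q \<tau>" by blast
      obtain c j where \<tau>_eq: "\<tau> = (c,j)" by (cases \<tau>)
      show ?thesis
      proof (cases "j = 0")
        case True
        have "(c, j) \<in> Tk" using \<tau>(1) unfolding \<tau>_eq .
        then have c: "c \<in> FC" unfolding Tk_mem using True by auto
        obtain f0 y0 where fy: "(c,f0) \<in> Chat" "y0 \<in> Yf c" "k = f0 + y0" using Yf[OF c] by blast
        have "q \<tau> - c + m*y0 \<in> Wt \<tau>" unfolding \<tau>_eq Wt_mem0[OF True] using fy(2) \<tau>_eq by blast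
        then have wW: "q \<tau> - c + m*y0 \<in> W" unfolding W_def using \<tau> by blast
        have "z = \<pi> (c,f0) + (q \<tau> - c + m*y0)" using zrk \<tau> fy \<pi>_pair by (simp add: algebra_simps)
        then show ?thesis using wW fy by blast
      next
        case False
        have "(c, j) \<in> Tk" using \<tau>(1) unfolding \<tau>_eq .
        then have "c \<in> IC \<and> j \<in> {1..n c}" unfolding Tk_mem using False by auto
        then have c: "c \<in> IC" "j \<in> {1..n c}" by blast+
        show ?thesis
        proof (cases "(c,k) \<in> S c j")
          case True
          then have "(c,k) \<in> Chat" using Scol[OF c] col_mem by blast
          moreover have "q \<tau> - c \<in> Wt \<tau>" unfolding \<tau>_eq Wt_mem1[OF \<open>j \<noteq> 0\<close>] by simp
          then have wW: "q \<tau> - c \<in> W" unfolding W_def using \<tau> by blast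
          moreover have "z = \<pi> (c,k) + (q \<tau> - c)" using zrk \<tau> \<pi>_pair by (simp add: algebra_simps)
          ultimately show ?thesis by blast
        next
          case False
          obtain p v where pv: "p \<in> Chat" "v \<in> V c j" "(c,k) = p + v" using Vp2[OF c False] by blast
          have "q \<tau> - c + \<pi> v \<in> Wt \<tau>" unfolding \<tau>_eq Wt_mem1[OF \<open>j \<noteq> 0\<close>] using pv(2) by blast
          then have wW: "q \<tau> - c + \<pi> v \<in> W" unfolding W_def using \<tau> by blast
          have "\<pi> (c,k) = \<pi> p + \<pi> v" using pv(3) \<pi>_add by metis
          then have "z = \<pi> p + (q \<tau> - c + \<pi> v)" using zrk \<tau> \<pi>_pair[of c k] by (simp add: algebra_simps)
          then show ?thesis using wW pv by blast
        qed
      qed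
    next
      case False
      obtain s where s: "s \<le> r \<and> r \<le> s + L - 1" "\<forall>u. s \<le> u \<and> u \<le> s+L-1 \<longrightarrow> (\<forall>\<tau>\<in>Tk. u mod m \<noteq> q \<tau>)"
      proof (cases "r < int T * (L+1)")
        case True
        define j0 where "j0 = r div (L+1)"
        have j00: "0 \<le> j0" unfolding j0_def using r0 L1 by (simp add: pos_imp_zdiv_nonneg_iff)
        have j0T: "j0 < int T" unfolding j0_def using True L1
          by (smt (verit, del_insts) minus_div_mult_eq_mod mult_right_less_imp_less pos_mod_sign)
        have rm: "r = j0*(L+1) + r mod (L+1)" unfolding j0_def by (rule div_mult_mod_eq[symmetric])
        have rmL: "r mod (L+1) \<noteq> L"
        proof
          assume a: "r mod (L+1) = L"
          have "nat j0 < T" using j0T j00 by linarith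
          then obtain \<tau> where "\<tau> \<in> Tk" "idx \<tau> = nat j0" using idx_surj by blast
          then have "q \<tau> = r" unfolding q_def using rm a j00 by simp
          then show False using False \<open>\<tau> \<in> Tk\<close> by auto
        qed
        have L1p: "0 < L+1" using L1 by simp
        have rm2: "0 \<le> r mod (L+1)" "r mod (L+1) < L+1"
          using pos_mod_sign[OF L1p] pos_mod_bound[OF L1p] by blast+
        have win: "j0*(L+1) \<le> r \<and> r \<le> j0*(L+1) + L - 1" using rm rm2 rmL by linarith
        have up: "j0*(L+1) \<le> (int T - 1)*(L+1)" using j0T L1 by (intro mult_right_mono) auto
        have lo: "0 \<le> j0*(L+1)" using j00 L1 by simp
        have "\<forall>u. j0*(L+1) \<le> u \<and> u \<le> j0*(L+1)+L-1 \<longrightarrow> (\<forall>\<tau>\<in>Tk. u mod m \<noteq> q \<tau>)"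
        proof (intro allI impI ballI)
          fix u \<tau>' assume u: "j0*(L+1) \<le> u \<and> u \<le> j0*(L+1)+L-1" and \<tau>': "\<tau>' \<in> Tk"
          show "u mod m \<noteq> q \<tau>'"
          proof
            assume um: "u mod m = q \<tau>'"
            have "(int T - 1)*(L+1) = int T*(L+1) - (L+1)" by (simp add: algebra_simps)
            then have "u < m" using u up mTL by linarith
            then have "u mod m = u" using u lo by (intro mod_pos_pos_trivial) auto
            then have hu: "u = int (idx \<tau>') * (L+1) + L" using um q_def by simp
            show False by (rule notin_window[of L j0 "int (idx \<tau>')"]) (use u L1 hu in auto)
          qed
        qed
        then show ?thesis by (intro that[OF win])
      next
        case False
        have "\<forall>u. r \<le> u \<and> u \<le> r+L-1 \<longrightarrow> (\<forall>\<tau>\<in>Tk. u mod m \<noteq> q \<tau>)"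
        proof (intro allI impI ballI)
          fix u \<tau>' assume u: "r \<le> u \<and> u \<le> r+L-1" and \<tau>': "\<tau>' \<in> Tk"
          have qr: "L \<le> q \<tau>' \<and> q \<tau>' \<le> int T * (L+1) - 1" using q_range[OF \<tau>'] .
          show "u mod m \<noteq> q \<tau>'"
          proof (cases "u < m")
            case True
            then have "u mod m = u" using u r0 by (intro mod_pos_pos_trivial) auto
            then show ?thesis using u qr False by linarith
          next
            case False
            have h1: "0 \<le> u - m" using False by linarith
            have h2: "u - m < m" using u r0 Lm by linarith
            have "u mod m = u - m" using h1 h2 by (metis minus_mod_self2 mod_pos_pos_trivial)
            then show ?thesis using u qr False r0 by linarith
          qed
        qed
        moreover have "r \<le> r \<and> r \<le> r + L - 1" using L1 by simp
        ultimately show ?thesis by (intro that[of r])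
      qed
      obtain x w1 where xw: "x \<in> X" "\<forall>x'\<in>X. s \<le> x'+w1 \<and> x'+w1 \<le> s+L-1" "x + w1 = r"
        using window s(1) by blast
      obtain y0 where y0: "(x,y0) \<in> Chat" using Xmem xw(1) by blast
      have "w1 + m*(k - y0) \<in> Wfull" unfolding Wfull_def mem_Collect_eq
        by (intro exI[of _ w1] exI[of _ "k - y0"] exI[of _ s] conjI refl xw(2) s(2))
      then have wW: "w1 + m*(k - y0) \<in> W" unfolding W_def by blast
      have "z = \<pi> (x,y0) + (w1 + m*(k - y0))" using zrk xw(3) \<pi>_pair by (simp add: algebra_simps)
      then show ?thesis using wW y0 by blast
    qed
  qed

  have witness: "\<forall>e\<in>\<pi> ` Chat. \<exists>z. \<forall>e'\<in>\<pi> ` Chat. \<forall>w\<in>W. z = e' + w \<longrightarrow> e' = e"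
  proof
    fix e assume "e \<in> \<pi> ` Chat"
    then obtain p where p: "p \<in> Chat" "e = \<pi> p" by blast
    obtain c s0 where ps: "p = (c,s0)" by (cases p)
    have cs: "(c,s0) \<in> Chat" using p ps by simp
    have cX: "c \<in> X" using cs Xmem by blast
    have e: "e = c + m*s0" using p ps \<pi>_pair by simp
    have gen: "\<And>e' w. e' \<in> \<pi> ` Chat \<Longrightarrow> \<exists>x' y'. (x',y') \<in> Chat \<and> x' \<in> X \<and> e' = x' + m*y'"
    proof -
      fix e' assume "e' \<in> \<pi> ` Chat"
      then obtain p' where "p' \<in> Chat" "e' = \<pi> p'" by blast
      moreover obtain x' y' where "p' = (x',y')" by (cases p')
      ultimately show "\<exists>x' y'. (x',y') \<in> Chat \<and> x' \<in> X \<and> e' = x' + m*y'"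
        using Xmem \<pi>_pair by blast
    qed
    from X_cases cX have "c \<in> FC \<or> c \<in> IC" by blast
    then show "\<exists>z. \<forall>e'\<in>\<pi> ` Chat. \<forall>w\<in>W. z = e' + w \<longrightarrow> e' = e"
    proof
      assume c: "c \<in> FC"
      define \<tau> where "\<tau> = (c, 0::nat)"
      have \<tau>: "\<tau> \<in> Tk" unfolding \<tau>_def using c Tk_mem by blast
      have s0F: "s0 \<in> {y. (c,y) \<in> Chat}" using cs by simp
      obtain y0 where y0: "y0 \<in> Yf c" "\<forall>f'\<in>{y. (c,y)\<in>Chat}. \<forall>y'\<in>Yf c. s0 + y0 = f' + y' \<longrightarrow> f' = s0"
        using Yf[OF c] s0F by blast
      show ?thesis
      proof (intro exI[of _ "q \<tau> + m*(s0 + y0)"] ballI impI)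
        fix e' w assume e': "e' \<in> \<pi> ` Chat" and w: "w \<in> W" and z: "q \<tau> + m*(s0 + y0) = e' + w"
        obtain x' y' where xy: "(x',y') \<in> Chat" "x' \<in> X" "e' = x' + m*y'" using gen[OF e'] by blast
        have "(x' + m*y' + w) mod m = (q \<tau> + (s0 + y0)*m) mod m" using z xy(3) by (simp add: algebra_simps)
        also have "\<dots> = q \<tau>" using q_mod[OF \<tau>] by (simp only: mod_mult_self1)
        finally have md: "(x' + m*y' + w) mod m = q \<tau>" .
        have "snd \<tau> = 0" unfolding \<tau>_def by simp
        then have "x' = fst \<tau> \<and> (\<exists>y\<in>Yf (fst \<tau>). w = q \<tau> - fst \<tau> + m*y)"
          using land[OF \<tau> xy(2) w md] by blast
        then obtain y where xc: "x' = c" and y: "y \<in> Yf c" "w = q \<tau> - c + m*y" unfolding \<tau>_def by auto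
        have "m*(s0 + y0) = m*(y' + y)" using z xy(3) xc y(2) by (simp add: algebra_simps)
        then have "s0 + y0 = y' + y" using m0 by simp
        moreover have "y' \<in> {y. (c,y)\<in>Chat}" using xy(1) xc by simp
        ultimately have "y' = s0" using y0(2) y(1) by blast
        then show "e' = e" using xy(3) xc e by simp
      qed
    next
      assume c: "c \<in> IC"
      have "(c,s0) \<in> column Chat c" using cs col_mem by simp
      also have "column Chat c = (\<Union>j \<in> {1..n c}. S c j)"
      proof -
        have "c \<in> inf_cols Chat" using c unfolding IC_def .
        then show ?thesis by (rule S_cover[rule_format, symmetric])
      qed
      finally obtain j where j: "j \<in> {1..n c}" "(c,s0) \<in> S c j" by blast
      define \<tau> where "\<tau> = (c, j)"
      have \<tau>: "\<tau> \<in> Tk" unfolding \<tau>_def using c j Tk_mem by blast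
      have j0: "snd \<tau> \<noteq> 0" using j unfolding \<tau>_def by simp
      show ?thesis
      proof (intro exI[of _ "q \<tau> + m*s0"] ballI impI)
        fix e' w assume e': "e' \<in> \<pi> ` Chat" and w: "w \<in> W" and z: "q \<tau> + m*s0 = e' + w"
        obtain x' y' where xy: "(x',y') \<in> Chat" "x' \<in> X" "e' = x' + m*y'" using gen[OF e'] by blast
        have "(x' + m*y' + w) mod m = (q \<tau> + s0*m) mod m" using z xy(3) by (simp add: algebra_simps)
        also have "\<dots> = q \<tau>" using q_mod[OF \<tau>] by (simp only: mod_mult_self1)
        finally have md: "(x' + m*y' + w) mod m = q \<tau>" .
        have "(x' = fst \<tau> \<and> w = q \<tau> - fst \<tau>) \<or>
              (\<exists>v\<in>V (fst \<tau>) (snd \<tau>). w = q \<tau> - fst \<tau> + \<pi> v \<and> x' = fst \<tau> - fst v)"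
          using land[OF \<tau> xy(2) w md] j0 by blast
        then have "(x' = c \<and> w = q \<tau> - c) \<or> (\<exists>v\<in>V c j. w = q \<tau> - c + \<pi> v \<and> x' = c - fst v)"
          unfolding \<tau>_def by simp
        then show "e' = e"
        proof
          assume a: "x' = c \<and> w = q \<tau> - c"
          then have "q \<tau> + m*s0 = c + m*y' + (q \<tau> - c)" using z xy(3) by simp
          then have "m*s0 = m*y'" by linarith
          then have "y' = s0" using m0 by simp
          then show "e' = e" using xy(3) a e by simp
        next
          assume "\<exists>v\<in>V c j. w = q \<tau> - c + \<pi> v \<and> x' = c - fst v"
          then obtain v where v: "v \<in> V c j" "w = q \<tau> - c + \<pi> v" "x' = c - fst v" by blast
          obtain d where d: "d \<in> X" "fst v = c - d" "\<forall>p\<in>column Chat d. p + v \<in> colset c - S c j"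
            using Vp1[OF c j(1) v(1)] by blast
          have xd: "x' = d" using v(3) d(2) by simp
          have "(x',y') \<in> column Chat d" using xy(1) xd col_mem by simp
          then have ns: "(x',y') + v \<notin> S c j" using d(3) by blast
          have "m*s0 = m*(y' + snd v)" using z xy(3) v(2) v(3) \<pi>_gen[of v] by (simp add: algebra_simps)
          then have "s0 = y' + snd v" using m0 by simp
          moreover have "(x',y') + v = (c, y' + snd v)" using v(3) by (simp add: prod_eq_iff)
          ultimately have "(x',y') + v = (c, s0)" by simp
          then show "e' = e" using ns j(2) by simp
        qed
      qed
    qed
  qed
  show ?thesis unfolding arises_as_MAC_def C_eq
    by (rule exI[of _ W], rule MAC_crit[OF cover witness])
qed

end
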